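(* Under the standing setup with $\gamma>0$ and $s_1=\dots=s_n=0$ (so Georgia's strategy set is $\{0\}$ and Hank's is $[0,1]$), define $\tilde q(0,0)=\beta-\beta\lambda-\chi\gamma$, $\tilde q(0,1)=(\gamma-\chi)\gamma+(\beta-2\gamma)(1-\lambda)$ and $\tilde r(0)=\frac{1-\lambda-\sqrt{(1-\lambda)(1-\lambda-\beta)+\chi\gamma}}{\gamma}$. Then the Nash equilibrium of the zero-sum game (Georgia minimizing $f$, Hank maximizing $f$) is $(0,1)$ if $\tilde q(0,1)\ge0$; $(0,0)$ if $\tilde q(0,0)\le0$; and $(0,\tilde r(0))$ otherwise.
   Context: Standing setup. Fix $n\in\mathbb N$ and $W=[w_{ij}]\in\mathbb R^{n\times n}$ with $w_{ij}\ge0$, $w_{ii}=0$. Let $\|W\|_\infty=\max_i\sum_j|w_{ij}|$, $\|W\|_1=\max_j\sum_i|w_{ij}|$, let $\lambda$ be the spectral radius of $W$, and assume there is $c\in\mathbb R^n$ with all entries positive and $W^\top c=\lambda c$. Fix $\beta\ge\gamma\ge0$ with $1-\max\{\|W\|_\infty,\|W\|_1\}>\max\{2\beta,4\gamma\}$. Fix innate opinions $s\in[0,1]^n$, $\overline s=\max_is_i$, $\underline s=\min_is_i$; Georgia chooses $g\in[0,\underline s]$, Hank chooses $h\in[\overline s,1]$. Set $\widehat c_i=c_i/\sum_jc_j$, $\widehat s=\sum_i\widehat c_is_i$, $\chi=\sum_i\widehat c_is_i\sum_jw_{ij}$. Define $$f(g,h)=\frac{(1-2\beta+(h-g)\gamma)\widehat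 s-\chi+(h+g)\beta+(g^2-h^2)\gamma}{1-\lambda+(g-h)\gamma}\,c^\top\mathbf 1$$ (the centrality-weighted steady state of the opinion dynamics with source opinions $g,h$). *)

theory Defs
  imports "HOL-Analysis.Analysis" "Jordan_Normal_Form.Spectral_Radius"
begin

(* Matrices are n x n, given as functions on indices 0..n-1 *)

definition norm_inf :: "nat \<Rightarrow> (nat \<Rightarrow> nat \<Rightarrow> real) \<Rightarrow> real" where
  "norm_inf n W = Max ((\<lambda>i. \<Sum>j<n. \<bar>W i j\<bar>) ` {..<n})"

definition norm_one :: "nat \<Rightarrow> (nat \<Rightarrow> nat \<Rightarrow> real) \<Rightarrow> real" where
  "norm_one n W = Max ((\<lambda>j. \<Sum>i<n. \<bar>W i j\<bar>) ` {..<n})"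

definition cmat :: "nat \<Rightarrow> (nat \<Rightarrow> nat \<Rightarrow> real) \<Rightarrow> complex mat" where
  "cmat n W = mat n n (\<lambda>(i,j). complex_of_real (W i j))"

definition chat :: "nat \<Rightarrow> (nat \<Rightarrow> real) \<Rightarrow> nat \<Rightarrow> real" where
  "chat n c i = c i / (\<Sum>j<n. c j)"

definition shat :: "nat \<Rightarrow> (nat \<Rightarrow> real) \<Rightarrow> (nat \<Rightarrow> real) \<Rightarrow> real" where
  "shat n c s = (\<Sum>i<n. chat n c i * s i)"

definition chi :: "nat \<Rightarrow> (nat \<Rightarrow> nat \<Rightarrow> real) \<Rightarrow> (nat \<Rightarrow> real) \<Rightarrow> (nat \<Rightarrow> real) \<Rightarrow> real" where
  "chi n W c s = (\<Sum>i<n. chat n c i * s i * (\<Sum>j<n. W i j))"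

(* centrality-weighted steady state f(g,h) *)
definition fval :: "nat \<Rightarrow> (nat \<Rightarrow> nat \<Rightarrow> real) \<Rightarrow> (nat \<Rightarrow> real) \<Rightarrow> (nat \<Rightarrow> real)
    \<Rightarrow> real \<Rightarrow> real \<Rightarrow> real \<Rightarrow> real \<Rightarrow> real \<Rightarrow> real" where
  "fval n W c s lam \<beta> \<gamma> g h =
     ((1 - 2*\<beta> + (h - g)*\<gamma>) * shat n c s - chi n W c s + (h + g)*\<beta> + (g^2 - h^2)*\<gamma>)
     / (1 - lam + (g - h)*\<gamma>) * (\<Sum>i<n. c i)"

definition is_NE :: "real set \<Rightarrow> real set \<Rightarrow> (real \<Rightarrow> real \<Rightarrow> real) \<Rightarrow> real \<times> real \<Rightarrow> bool" where
  "is_NE G H F p \<longleftrightarrow> fst p \<in> G \<and> snd p \<in> H \<and>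
     (\<forall>g\<in>G. F (fst p) (snd p) \<le> F g (snd p)) \<and>
     (\<forall>h\<in>H. F (fst p) h \<le> F (fst p) (snd p))"

end

theory Submission
  imports Defs
begin

lemma phi_diff:
  fixes a b g h k :: real
  assumes "a - g*h > 0" "a - g*k > 0"
  shows "(b*h - g*h^2)/(a - g*h) - (b*k - g*k^2)/(a - g*k)
       = (h - k) * ((a - g*h)*(a - g*k) - a*(a-b)) / ((a - g*h)*(a - g*k))"
  using assms by (simp add: field_simps) (simp add: algebra_simps power2_eq_square)

lemma phi_max:
  fixes a b g t :: real
  assumes g: "g > 0" and ag: "a > g" and ab: "a > b" and b: "b > 0" and t: "0 \<le> t" "t \<le> 1"
  and incr: "\<And>k. 0 \<le> k \<Longrightarrow> k < t \<Longrightarrow> (a - g*t)*(a - g*k) > a*(a-b)"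
  and decr: "\<And>k. t < k \<Longrightarrow> k \<le> 1 \<Longrightarrow> (a - g*t)*(a - g*k) < a*(a-b)"
  shows "\<And>k. 0 \<le> k \<Longrightarrow> k \<le> 1 \<Longrightarrow> k \<noteq> t \<Longrightarrow>
     (b*k - g*k^2)/(a - g*k) < (b*t - g*t^2)/(a - g*t)"
proof -
  fix k :: real assume k: "0 \<le> k" "k \<le> 1" "k \<noteq> t"
  have uk: "a - g*k > 0" using k g ag by (smt (verit) mult_left_le)
  have ut: "a - g*t > 0" using t g ag by (smt (verit) mult_left_le)
  have pp: "(a - g*t)*(a - g*k) > 0" using uk ut by simp
  have D: "(b*t - g*t^2)/(a - g*t) - (b*k - g*k^2)/(a - g*k)
       = (t - k) * ((a - g*t)*(a - g*k) - a*(a-b)) / ((a - g*t)*(a - g*k))"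
    by (rule phi_diff[OF ut uk])
  have "(t - k) * ((a - g*t)*(a - g*k) - a*(a-b)) > 0"
  proof (cases "k < t")
    case True then show ?thesis using incr[OF k(1) True] by simp
  next
    case False then have "t < k" using k by simp
    then show ?thesis using decr[OF _ k(2)] by (simp add: mult_neg_neg)
  qed
  then have "(t - k) * ((a - g*t)*(a - g*k) - a*(a-b)) / ((a - g*t)*(a - g*k)) > 0"
    using pp by simp
  then show "(b*k - g*k^2)/(a - g*k) < (b*t - g*t^2)/(a - g*t)" using D by linarith
qed

theorem corollary4:
  fixes n :: nat and W :: "nat \<Rightarrow> nat \<Rightarrow> real" and c s :: "nat \<Rightarrow> real"
    and \<beta> \<gamma> :: real
  defines "lam \<equiv> spectral_radius (cmat n W)"
  defines "smin \<equiv> Min (s ` {..<n})" and "smax \<equiv> Max (s ` {..<n})"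
  defines "F \<equiv> fval n W c s lam \<beta> \<gamma>"
  defines "chv \<equiv> chi n W c s"
  defines "q00 \<equiv> \<beta> - \<beta> * lam - chv * \<gamma>"
  defines "q01 \<equiv> (\<gamma> - chv) * \<gamma> + (\<beta> - 2*\<gamma>) * (1 - lam)"
  defines "r0 \<equiv> (1 - lam - sqrt ((1 - lam) * (1 - lam - \<beta>) + chv * \<gamma>)) / \<gamma>"
  assumes n_pos: "n \<ge> 1"
    and W_nonneg: "\<forall>i<n. \<forall>j<n. W i j \<ge> 0"
    and W_diag: "\<forall>i<n. W i i = 0"
    and c_pos: "\<forall>i<n. c i > 0"
    and c_eig: "\<forall>j<n. (\<Sum>i<n. W i j * c i) = lam * c j"
    and \<beta>\<gamma>: "\<beta> \<ge> \<gamma>" "\<gamma> > 0"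
    and norm_bound: "1 - max (norm_inf n W) (norm_one n W) > max (2*\<beta>) (4*\<gamma>)"
    and s_zero: "\<forall>i<n. s i = 0"
  shows "{p. is_NE {g. 0 \<le> g \<and> g \<le> smin} {h. smax \<le> h \<and> h \<le> 1} F p} =
           (if q01 \<ge> 0 then {(0, 1)}
            else if q00 \<le> 0 then {(0, 0)}
            else {(0, r0)})"
proof -
  have ne: "{..<n} \<noteq> {}" using n_pos by (auto simp: lessThan_empty_iff)
  have simg: "s ` {..<n} = {0}" using s_zero ne by auto
  have smin0: "smin = 0" unfolding smin_def simg by simp
  have smax0: "smax = 0" unfolding smax_def simg by simp
  have chv0: "chv = 0" unfolding chv_def chi_def using s_zero by simp
  have shat0: "shat n c s = 0" unfolding shat_def using s_zero by simp
  define C where "C = (\<Sum>i<n. c i)"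
  have Cpos: "C > 0" unfolding C_def using c_pos ne by (intro sum_pos) auto
  have rowle: "(\<Sum>j<n. W i j) \<le> norm_inf n W" if "i < n" for i
  proof -
    have "(\<Sum>j<n. W i j) = (\<Sum>j<n. \<bar>W i j\<bar>)" using W_nonneg that by (intro sum.cong) auto
    also have "\<dots> \<le> norm_inf n W" unfolding norm_inf_def using that by (intro Max_ge) auto
    finally show ?thesis .
  qed
  have eq: "lam * C = (\<Sum>i<n. c i * (\<Sum>j<n. W i j))"
  proof -
    have "lam * C = (\<Sum>j<n. lam * c j)" unfolding C_def by (simp add: sum_distrib_left)
    also have "\<dots> = (\<Sum>j<n. \<Sum>i<n. W i j * c i)" using c_eig by simp
    also have "\<dots> = (\<Sum>i<n. \<Sum>j<n. W i j * c i)" by (rule sum.swap)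
    also have "\<dots> = (\<Sum>i<n. c i * (\<Sum>j<n. W i j))" by (simp add: sum_distrib_left mult.commute)
    finally show ?thesis .
  qed
  have "lam * C \<le> (\<Sum>i<n. c i * norm_inf n W)" unfolding eq
    using c_pos rowle by (intro sum_mono mult_left_mono) (auto intro: less_imp_le)
  also have "\<dots> = norm_inf n W * C" unfolding C_def by (simp add: sum_distrib_left mult.commute)
  finally have "lam \<le> norm_inf n W" using Cpos by simp
  then have lamub: "1 - lam > 2*\<beta>" "1 - lam > 4*\<gamma>" using norm_bound by auto
  have "lam * C \<ge> 0" unfolding eq using c_pos W_nonneg
    by (intro sum_nonneg mult_nonneg_nonneg) (auto intro: sum_nonneg less_imp_le)
  then have lam0: "lam \<ge> 0" using Cpos by (simp add: zero_le_mult_iff)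
  define a where "a = 1 - lam"
  have a: "a > 2*\<beta>" "a > 4*\<gamma>" "a \<le> 1" using lamub lam0 unfolding a_def by auto
  define \<phi> where "\<phi> h = (\<beta>*h - \<gamma>*h^2)/(a - \<gamma>*h)" for h
  have Fh: "F 0 h = \<phi> h * C" for h
    unfolding F_def fval_def \<phi>_def a_def C_def chv0[unfolded chv_def] shat0
    by (simp add: algebra_simps)
  have NE: "is_NE {g. 0 \<le> g \<and> g \<le> smin} {h. smax \<le> h \<and> h \<le> 1} F p \<longleftrightarrow>
      fst p = 0 \<and> 0 \<le> snd p \<and> snd p \<le> 1 \<and> (\<forall>h. 0 \<le> h \<and> h \<le> 1 \<longrightarrow> \<phi> h \<le> \<phi> (snd p))" for p
  proof -
    have G: "{g. 0 \<le> g \<and> g \<le> smin} = {0}" using smin0 by auto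
    show ?thesis unfolding is_NE_def G smax0 using Cpos
      by (auto simp: Fh)
  qed
  have uniq: "{p. is_NE {g. 0 \<le> g \<and> g \<le> smin} {h. smax \<le> h \<and> h \<le> 1} F p} = {(0, t)}"
    if t: "0 \<le> t" "t \<le> 1" and strict: "\<And>k. 0 \<le> k \<Longrightarrow> k \<le> 1 \<Longrightarrow> k \<noteq> t \<Longrightarrow> \<phi> k < \<phi> t" for t
  proof -
    have "fst p = 0 \<and> 0 \<le> snd p \<and> snd p \<le> 1 \<and> (\<forall>h. 0 \<le> h \<and> h \<le> 1 \<longrightarrow> \<phi> h \<le> \<phi> (snd p))
       \<longleftrightarrow> p = (0, t)" for p
    proof
      assume A: "fst p = 0 \<and> 0 \<le> snd p \<and> snd p \<le> 1 \<and> (\<forall>h. 0 \<le> h \<and> h \<le> 1 \<longrightarrow> \<phi> h \<le> \<phi> (snd p))"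
      then have "\<phi> t \<le> \<phi> (snd p)" using t by auto
      then have "snd p = t" using strict A by force
      then show "p = (0, t)" using A by (cases p) auto
    next
      assume "p = (0, t)" then show "fst p = 0 \<and> 0 \<le> snd p \<and> snd p \<le> 1 \<and> (\<forall>h. 0 \<le> h \<and> h \<le> 1 \<longrightarrow> \<phi> h \<le> \<phi> (snd p))"
        using t strict by (auto intro: less_imp_le)
    qed
    then show ?thesis using NE by auto
  qed
  have bpos: "\<beta> > 0" using \<beta>\<gamma> by simp
  have ag: "a > \<gamma>" "a > \<beta>" using a bpos \<beta>\<gamma> by auto
  have q00pos: "q00 > 0" unfolding q00_def chv0 using bpos lamub
    by (simp add: algebra_simps)
  define D where "D = a*(a-\<beta>)"
  have Dpos: "D > 0" unfolding D_def using ag bpos by simp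
  have q01eq: "q01 = (a - \<gamma>)^2 - D" unfolding q01_def chv0 D_def a_def
    by (simp add: algebra_simps power2_eq_square)
  show ?thesis
  proof (cases "q01 \<ge> 0")
    case True
    have "\<And>k. 0 \<le> k \<Longrightarrow> k \<le> 1 \<Longrightarrow> k \<noteq> 1 \<Longrightarrow> \<phi> k < \<phi> 1"
      unfolding \<phi>_def
    proof (rule phi_max[OF \<beta>\<gamma>(2) ag(1) ag(2) bpos])
      fix k :: real assume k: "0 \<le> k" "k < 1"
      have u1: "a - \<gamma>*1 > 0" using ag by simp
      have "a - \<gamma>*k > a - \<gamma>*1" using k \<beta>\<gamma> by simp
      then have "(a - \<gamma>*1)*(a - \<gamma>*k) > (a - \<gamma>*1)*(a - \<gamma>*1)" using u1
        by (intro mult_strict_left_mono) auto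
      moreover have "(a - \<gamma>*1)*(a - \<gamma>*1) \<ge> a*(a-\<beta>)" using True q01eq D_def
        by (simp add: power2_eq_square)
      ultimately show "(a - \<gamma>*1)*(a - \<gamma>*k) > a*(a-\<beta>)" by linarith
    qed auto
    then show ?thesis using uniq[of 1] True by simp
  next
    case False
    define \<rho> where "\<rho> = sqrt D"
    have r0eq: "r0 = (a - \<rho>)/\<gamma>" unfolding r0_def \<rho>_def D_def a_def chv0 by simp
    have rho: "\<rho> > 0" "\<rho>^2 = D" unfolding \<rho>_def using Dpos by auto
    have "D < a^2" unfolding D_def using bpos ag by (simp add: power2_eq_square algebra_simps)
    then have rlt: "\<rho> < a" unfolding \<rho>_def using ag
      by (metis abs_of_pos less_trans real_sqrt_less_mono real_sqrt_abs \<beta>\<gamma>(2))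
    have "(a - \<gamma>)^2 < \<rho>^2" using False q01eq rho by simp
    then have rgt: "a - \<gamma> < \<rho>" using rho ag
      by (smt (verit) power_mono)
    have ut: "a - \<gamma>*r0 = \<rho>" unfolding r0eq using \<beta>\<gamma> by simp
    have t0: "0 \<le> r0" unfolding r0eq using rlt \<beta>\<gamma> by simp
    have t1: "r0 \<le> 1" unfolding r0eq using rgt \<beta>\<gamma> by (simp add: divide_le_eq)
    have "\<And>k. 0 \<le> k \<Longrightarrow> k \<le> 1 \<Longrightarrow> k \<noteq> r0 \<Longrightarrow> \<phi> k < \<phi> r0"
      unfolding \<phi>_def
    proof (rule phi_max[OF \<beta>\<gamma>(2) ag(1) ag(2) bpos t0 t1])
      fix k :: real assume k: "0 \<le> k" "k < r0"
      have "a - \<gamma>*k > a - \<gamma>*r0" using k \<beta>\<gamma> by simp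
      then have "(a - \<gamma>*r0)*(a - \<gamma>*k) > \<rho>*\<rho>" using ut rho by simp
      then show "(a - \<gamma>*r0)*(a - \<gamma>*k) > a*(a-\<beta>)" using rho D_def by (simp add: power2_eq_square)
    next
      fix k :: real assume k: "r0 < k" "k \<le> 1"
      have "a - \<gamma>*k < a - \<gamma>*r0" using k \<beta>\<gamma> by simp
      then have "(a - \<gamma>*r0)*(a - \<gamma>*k) < \<rho>*\<rho>" using ut rho by simp
      then show "(a - \<gamma>*r0)*(a - \<gamma>*k) < a*(a-\<beta>)" using rho D_def by (simp add: power2_eq_square)
    qed
    then show ?thesis using uniq[OF t0 t1] False q00pos by simp
  qed
qed

end
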